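(* Let $T:X\to X$ be a continuous map of a compact metric space $X$ which is not minimal. If $\mu$ is an ergodic $T$-invariant Borel probability measure with full support ($S_\mu=X$), then $\mu(A(T))=0$.
   Context: $T$ is minimal if for every $y\in X$, $\omega_T(y)=X$. $S_\mu$ is the support of $\mu$. $A(T)$ is the set of almost periodic points: $x$ such that for every open $U\ni x$ there is $N>0$ such that for every $n\ge1$ there exists $k\in[n,n+N]$ with $T^kx\in U$. *)

theory Defs
  imports "HOL-Probability.Probability"
begin

definition omega_limit :: "('a::topological_space \<Rightarrow> 'a) \<Rightarrow> 'a \<Rightarrow> 'a set" where
  "omega_limit T y = {x. \<forall>U. open U \<and> x \<in> U \<longrightarrow> (\<forall>N. \<exists>n\<ge>N. (T ^^ n) y \<in> U)}"

definition minimal_map :: "('a::topological_space \<Rightarrow> 'a) \<Rightarrow> bool" where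
  "minimal_map T \<longleftrightarrow> (\<forall>y. omega_limit T y = UNIV)"

definition almost_periodic_points :: "('a::topological_space \<Rightarrow> 'a) \<Rightarrow> 'a set" where
  "almost_periodic_points T = {x. \<forall>U. open U \<and> x \<in> U \<longrightarrow>
      (\<exists>N>0. \<forall>n\<ge>1. \<exists>k\<in>{n..n+N}. (T ^^ k) x \<in> U)}"

definition measure_support :: "'a::topological_space measure \<Rightarrow> 'a set" where
  "measure_support M = {x. \<forall>U. open U \<and> x \<in> U \<longrightarrow> emeasure M U > 0}"

definition invariant_measure :: "('a \<Rightarrow> 'a) \<Rightarrow> 'a measure \<Rightarrow> bool" where
  "invariant_measure T M \<longleftrightarrow> T \<in> measurable M M \<and> distr M M T = M"

definition ergodic_measure :: "('a \<Rightarrow> 'a) \<Rightarrow> 'a measure \<Rightarrow> bool" where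
  "ergodic_measure T M \<longleftrightarrow> invariant_measure T M \<and>
     (\<forall>A\<in>sets M. T -` A \<inter> space M = A \<longrightarrow> emeasure M A = 0 \<or> emeasure M A = 1)"

end

theory Submission
  imports Defs
begin

lemma cont_pow:
  fixes T :: "'a::topological_space \<Rightarrow> 'a"
  assumes "continuous_on UNIV T"
  shows "continuous_on UNIV (T^^n)"
proof (induction n)
  case 0 have "T^^0 = id" by (rule ext) simp
  then show ?case by (simp add: continuous_on_id)
next
  case (Suc n)
  have "continuous_on UNIV (T \<circ> T^^n)"
    using Suc continuous_on_subset[OF assms] by (intro continuous_on_compose) auto
  then show ?case by simp
qed

lemma x_in_omega:
  fixes T :: "'a::metric_space \<Rightarrow> 'a"
  assumes cont: "continuous_on UNIV T"
    and ap: "x \<in> almost_periodic_points T"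
    and om: "omega_limit T x = UNIV"
  shows "x \<in> omega_limit T y"
  unfolding omega_limit_def
proof (intro CollectI allI impI)
  fix V N0 assume V: "open V \<and> x \<in> V"
  then obtain e where e: "e > 0" "ball x e \<subseteq> V" by (meson open_contains_ball)
  have "open (ball x (e/2)) \<and> x \<in> ball x (e/2)" using e by simp
  with ap obtain N where N: "N > 0" "\<forall>n\<ge>1. \<exists>k\<in>{n..n+N}. (T ^^ k) x \<in> ball x (e/2)"
    unfolding almost_periodic_points_def by blast
  define y' where "y' = (T^^N0) y"
  define Ob where "Ob = (\<Inter>j\<in>{..N}. (T^^j) -` ball ((T^^j) y') (e/2))"
  have "open Ob" unfolding Ob_def
    by (intro open_INT finite_atMost ballI open_vimage open_ball cont_pow cont)
  moreover have "y' \<in> Ob" unfolding Ob_def using e by auto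
  moreover have "y' \<in> omega_limit T x" using om by simp
  ultimately obtain p where p: "p \<ge> 1" "(T^^p) x \<in> Ob"
    unfolding omega_limit_def by blast
  then obtain k where k: "k \<in> {p..p+N}" "(T ^^ k) x \<in> ball x (e/2)" using N by blast
  define j where "j = k - p"
  have jN: "j \<le> N" using k j_def by auto
  have kk: "(T^^k) x = (T^^j) ((T^^p) x)" using k j_def
    by (metis funpow_add le_add_diff_inverse2 atLeastAtMost_iff o_apply)
  have d1: "dist ((T^^j) y') ((T^^k) x) < e/2"
    using p(2) jN kk unfolding Ob_def by auto
  have d2: "dist x ((T^^k) x) < e/2" using k by auto
  have "dist x ((T^^j) y') < e"
    using d1 d2 dist_triangle_half_l[of x "(T^^k) x" e "(T^^j) y'"] by (simp add: dist_commute)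
  then have "(T^^j) y' \<in> V" using e by auto
  moreover have "(T^^j) y' = (T^^(j+N0)) y" unfolding y'_def by (simp add: funpow_add)
  ultimately show "\<exists>n\<ge>N0. (T ^^ n) y \<in> V" by (metis le_add2)
qed

lemma ap_minimal:
  fixes T :: "'a::metric_space \<Rightarrow> 'a"
  assumes cont: "continuous_on UNIV T"
    and ap: "x \<in> almost_periodic_points T"
    and om: "omega_limit T x = UNIV"
  shows "minimal_map T"
  unfolding minimal_map_def
proof (intro allI)
  fix y
  show "omega_limit T y = UNIV"
  proof (intro set_eqI iffI)
    fix z assume "z \<in> (UNIV :: 'a set)"
    show "z \<in> omega_limit T y" unfolding omega_limit_def
    proof (intro CollectI allI impI)
      fix U N0 assume U: "open U \<and> z \<in> U"
      have "z \<in> omega_limit T x" using om by simp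
      then obtain m where m: "(T^^m) x \<in> U" using U unfolding omega_limit_def by blast
      have "open ((T^^m) -` U)" using U by (intro open_vimage cont_pow cont) auto
      moreover have "x \<in> (T^^m) -` U" using m by simp
      moreover have "x \<in> omega_limit T y" by (rule x_in_omega[OF cont ap om])
      ultimately obtain n where n: "n \<ge> N0" "(T^^n) y \<in> (T^^m) -` U"
        unfolding omega_limit_def by blast
      then have "(T^^(m+n)) y \<in> U" by (simp add: funpow_add)
      then show "\<exists>n\<ge>N0. (T ^^ n) y \<in> U" using n(1) by (metis le_add2 add.commute trans_le_add2)
    qed
  qed simp
qed

lemma ap_borel:
  fixes T :: "'a::metric_space \<Rightarrow> 'a"
  assumes cont: "continuous_on UNIV T"
  shows "almost_periodic_points T \<in> sets borel"
proof -
  define Op where "Op = (\<lambda>N n (m::nat). \<Union>k\<in>{n..n+N}. {x. dist ((T^^k) x) x < 1 / real (Suc m)})"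
  have opn: "open (Op N n m)" for N n m unfolding Op_def
    by (intro open_UN ballI open_Collect_less continuous_intros cont_pow cont)
  have eq: "almost_periodic_points T = (\<Inter>m. \<Union>N\<in>{0<..}. \<Inter>n\<in>{1..}. Op N n m)"
  proof (intro set_eqI iffI)
    fix x assume x: "x \<in> almost_periodic_points T"
    show "x \<in> (\<Inter>m. \<Union>N\<in>{0<..}. \<Inter>n\<in>{1..}. Op N n m)"
    proof (intro InterI, clarify)
      fix m
      have "open (ball x (1 / real (Suc m))) \<and> x \<in> ball x (1 / real (Suc m))" by simp
      with x obtain N where N: "N > 0" "\<forall>n\<ge>1. \<exists>k\<in>{n..n+N}. (T ^^ k) x \<in> ball x (1 / real (Suc m))"
        unfolding almost_periodic_points_def by blast
      then have "x \<in> (\<Inter>n\<in>{1..}. Op N n m)" unfolding Op_def by (auto simp: dist_commute)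
      then show "x \<in> (\<Union>N\<in>{0<..}. \<Inter>n\<in>{1..}. Op N n m)" using N(1) by auto
    qed
  next
    fix x assume x: "x \<in> (\<Inter>m. \<Union>N\<in>{0<..}. \<Inter>n\<in>{1..}. Op N n m)"
    show "x \<in> almost_periodic_points T" unfolding almost_periodic_points_def
    proof (intro CollectI allI impI)
      fix U assume U: "open U \<and> x \<in> U"
      then obtain e where e: "e > 0" "ball x e \<subseteq> U" by (meson open_contains_ball)
      obtain m where m: "inverse (real (Suc m)) < e" using reals_Archimedean[OF e(1)] by blast
      from x obtain N where N: "N > 0" "x \<in> (\<Inter>n\<in>{1..}. Op N n m)" by blast
      have "\<forall>n\<ge>1. \<exists>k\<in>{n..n+N}. (T ^^ k) x \<in> U"
      proof (intro allI impI)
        fix n :: nat assume "n \<ge> 1"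
        then have "x \<in> Op N n m" using N(2) by auto
        then obtain k where k: "k \<in> {n..n+N}" "dist ((T^^k) x) x < 1 / real (Suc m)"
          unfolding Op_def by blast
        then have "(T^^k) x \<in> ball x e" using m k(2) by (simp add: dist_commute inverse_eq_divide)
        then show "\<exists>k\<in>{n..n+N}. (T ^^ k) x \<in> U" using k(1) e(2) by blast
      qed
      then show "\<exists>N>0. \<forall>n\<ge>1. \<exists>k\<in>{n..n+N}. (T ^^ k) x \<in> U" using N(1) by blast
    qed
  qed
  show ?thesis unfolding eq
    by (intro sets.countable_INT'' sets.countable_UN'' borel_open opn) auto
qed

lemma recur:
  fixes T :: "'a::metric_space \<Rightarrow> 'a" and \<mu> :: "'a measure"
  assumes cont: "continuous_on UNIV T"
    and sets: "sets \<mu> = sets borel"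
    and P: "prob_space \<mu>"
    and erg: "ergodic_measure T \<mu>"
    and B: "open B" "emeasure \<mu> B > 0"
  shows "AE x in \<mu>. \<forall>N. \<exists>n\<ge>N. (T^^n) x \<in> B"
proof -
  interpret prob_space \<mu> by (rule P)
  have sp: "space \<mu> = UNIV" using sets_eq_imp_space_eq[OF sets] by simp
  have Tm: "T \<in> measurable \<mu> \<mu>" and dT: "distr \<mu> \<mu> T = \<mu>"
    using erg unfolding ergodic_measure_def invariant_measure_def by auto
  have inv: "(T^^n) -` A \<in> sets \<mu> \<and> emeasure \<mu> ((T^^n) -` A) = emeasure \<mu> A"
    if "A \<in> sets \<mu>" for A n
    using that
  proof (induction n arbitrary: A)
    case 0 then show ?case by simp
  next
    case (Suc n)
    have TA: "T -` A \<in> sets \<mu>" using measurable_sets[OF Tm Suc.prems] sp by simp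
    have eTA: "emeasure \<mu> (T -` A) = emeasure \<mu> A"
      using emeasure_distr[OF Tm Suc.prems] dT sp by simp
    have eq: "(T^^Suc n) -` A = (T^^n) -` (T -` A)" by (auto simp: funpow_Suc_right)
    show ?case unfolding eq using Suc.IH[OF TA] eTA by simp
  qed
  define E where "E = (\<lambda>N. \<Union>n\<in>{N..}. (T^^n) -` B)"
  have Bs: "B \<in> sets \<mu>" using B(1) sets by simp
  have Es: "E N \<in> sets \<mu>" for N
    unfolding E_def using inv[OF Bs] by (intro sets.countable_UN'') auto
  have EN: "E N = (T^^N) -` E 0" for N
  proof (intro set_eqI iffI)
    fix x assume "x \<in> E N"
    then obtain n where n: "n \<ge> N" "(T^^n) x \<in> B" unfolding E_def by auto
    have "(T^^n) x = (T^^(n-N)) ((T^^N) x)" using n(1)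
      by (metis funpow_add le_add_diff_inverse2 o_apply)
    then show "x \<in> (T^^N) -` E 0" using n unfolding E_def by auto
  next
    fix x assume "x \<in> (T^^N) -` E 0"
    then obtain m where m: "(T^^m) ((T^^N) x) \<in> B" unfolding E_def by auto
    then have "(T^^(m+N)) x \<in> B" by (simp add: funpow_add)
    then show "x \<in> E N" unfolding E_def by auto
  qed
  have eE: "emeasure \<mu> (E N) = emeasure \<mu> (E 0)" for N
    using inv[OF Es[of 0], of N] EN[of N] by simp
  have dec: "decseq E" unfolding decseq_def E_def by (auto intro: order_trans)
  define R where "R = (\<Inter>N. E N)"
  have Rs: "R \<in> sets \<mu>" unfolding R_def using Es by auto
  have "emeasure \<mu> R = (INF N. emeasure \<mu> (E N))" unfolding R_def
    by (rule INF_emeasure_decseq[symmetric]) (use Es dec in auto)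
  also have "\<dots> = (INF N::nat. emeasure \<mu> (E 0))" using eE by metis
  also have "\<dots> = emeasure \<mu> (E 0)" by simp
  finally have eR: "emeasure \<mu> R = emeasure \<mu> (E 0)" .
  have "B \<subseteq> E 0" unfolding E_def proof fix x assume "x \<in> B" then have "(T^^0) x \<in> B" by simp then show "x \<in> (\<Union>n\<in>{0..}. (T^^n) -` B)" by blast qed
  then have "emeasure \<mu> B \<le> emeasure \<mu> (E 0)" using Es by (intro emeasure_mono) auto
  then have R0: "emeasure \<mu> R \<noteq> 0" using B(2) eR by auto
  have Rdef: "R = {x. \<forall>N. \<exists>n\<ge>N. (T^^n) x \<in> B}" unfolding R_def E_def by (auto simp: Bex_def)
  have "T -` R \<inter> space \<mu> = R"
  proof (intro set_eqI iffI)
    fix x assume "x \<in> T -` R \<inter> space \<mu>"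
    then have h: "\<forall>N. \<exists>n\<ge>N. (T^^n) (T x) \<in> B" unfolding Rdef by auto
    show "x \<in> R" unfolding Rdef
    proof (intro CollectI allI)
      fix N obtain n where "n \<ge> N" "(T^^n) (T x) \<in> B" using h by blast
      then show "\<exists>n\<ge>N. (T^^n) x \<in> B" by (metis funpow_Suc_right o_apply le_SucI)
    qed
  next
    fix x assume "x \<in> R"
    then have h: "\<forall>N. \<exists>n\<ge>N. (T^^n) x \<in> B" unfolding Rdef by auto
    show "x \<in> T -` R \<inter> space \<mu>" unfolding Rdef sp
    proof (intro IntI UNIV_I vimageI2 CollectI allI)
      fix N obtain n where n: "n \<ge> Suc N" "(T^^n) x \<in> B" using h by blast
      then obtain n' where n': "n = Suc n'" by (cases n) auto
      then have "(T^^n') (T x) \<in> B" using n by (simp add: funpow_swap1)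
      then show "\<exists>n\<ge>N. (T^^n) (T x) \<in> B" using n n' by auto
    qed
  qed
  then have "emeasure \<mu> R = 0 \<or> emeasure \<mu> R = 1" using erg Rs unfolding ergodic_measure_def by auto
  then have "emeasure \<mu> R = 1" using R0 by auto
  then have "prob R = 1" by (simp add: emeasure_eq_measure)
  then have "AE x in \<mu>. x \<in> R" using AE_in_set_eq_1[OF Rs] by simp
  then show ?thesis unfolding Rdef by simp
qed

theorem mainTheorem13:
  fixes T :: "'a::metric_space \<Rightarrow> 'a" and \<mu> :: "'a measure"
  assumes "compact (UNIV :: 'a set)"
    and "continuous_on UNIV T"
    and "\<not> minimal_map T"
    and "sets \<mu> = sets borel"
    and "prob_space \<mu>"
    and "ergodic_measure T \<mu>"
    and "measure_support \<mu> = UNIV"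
  shows "almost_periodic_points T \<in> null_sets \<mu>"
proof -
  note cpt = assms(1) and cont = assms(2) and nm = assms(3) and sets = assms(4)
    and P = assms(5) and erg = assms(6) and supp = assms(7)
  have "\<forall>m::nat. \<exists>C. finite C \<and> (UNIV::'a set) \<subseteq> (\<Union>c\<in>C. ball c (1 / real (Suc m)))"
  proof
    fix m :: nat
    have "(UNIV::'a set) \<subseteq> (\<Union>c\<in>UNIV. ball c (1 / real (Suc m)))" by auto
    then obtain C where "C \<subseteq> UNIV" "finite C" "(UNIV::'a set) \<subseteq> (\<Union>c\<in>C. ball c (1 / real (Suc m)))"
      using compactE_image[OF cpt, of UNIV "\<lambda>c. ball c (1 / real (Suc m))"] by auto
    then show "\<exists>C. finite C \<and> (UNIV::'a set) \<subseteq> (\<Union>c\<in>C. ball c (1 / real (Suc m)))" by blast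
  qed
  then obtain C where C: "\<And>m. finite (C m)" "\<And>m. (UNIV::'a set) \<subseteq> (\<Union>c\<in>C m. ball c (1 / real (Suc m)))"
    by metis
  have pos: "emeasure \<mu> (ball c r) > 0" if "r > 0" for c r
  proof -
    have "c \<in> measure_support \<mu>" using supp by simp
    then show ?thesis using that unfolding measure_support_def by auto
  qed
  have "AE x in \<mu>. \<forall>m. \<forall>c\<in>C m. \<forall>N. \<exists>n\<ge>N. (T^^n) x \<in> ball c (1 / real (Suc m))"
    unfolding AE_all_countable
  proof
    fix m
    show "AE x in \<mu>. \<forall>c\<in>C m. \<forall>N. \<exists>n\<ge>N. (T^^n) x \<in> ball c (1 / real (Suc m))"
      using C(1)[of m]
      by (intro AE_ball_countable' recur[OF cont sets P erg] pos open_ball)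
        (auto intro: countable_finite)
  qed
  then obtain Nl where Nl: "{x \<in> space \<mu>. \<not> (\<forall>m. \<forall>c\<in>C m. \<forall>N. \<exists>n\<ge>N. (T^^n) x \<in> ball c (1 / real (Suc m)))} \<subseteq> Nl"
    "emeasure \<mu> Nl = 0" "Nl \<in> sets \<mu>"
    by (rule AE_E)
  have sp: "space \<mu> = UNIV" using sets_eq_imp_space_eq[OF sets] by simp
  have good: "omega_limit T x = UNIV"
    if g: "\<forall>m. \<forall>c\<in>C m. \<forall>N. \<exists>n\<ge>N. (T^^n) x \<in> ball c (1 / real (Suc m))" for x
  proof (intro set_eqI iffI)
    fix z assume "z \<in> (UNIV::'a set)"
    show "z \<in> omega_limit T x" unfolding omega_limit_def
    proof (intro CollectI allI impI)
      fix U N assume U: "open U \<and> z \<in> U"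
      then obtain e where e: "e > 0" "ball z e \<subseteq> U" by (meson open_contains_ball)
      have "e/2 > 0" using e by simp
      then obtain m where m: "inverse (real (Suc m)) < e/2" using reals_Archimedean by blast
      obtain c where c: "c \<in> C m" "z \<in> ball c (1 / real (Suc m))" using C(2)[of m] by blast
      obtain n where n: "n \<ge> N" "(T^^n) x \<in> ball c (1 / real (Suc m))" using g c(1) by blast
      have "dist z ((T^^n) x) \<le> dist c z + dist c ((T^^n) x)" by (metis dist_triangle dist_commute)
      also have "\<dots> < e" using c(2) n(2) m by (simp add: inverse_eq_divide)
      finally have "(T^^n) x \<in> U" using e(2) by auto
      then show "\<exists>n\<ge>N. (T ^^ n) x \<in> U" using n(1) by blast
    qed
  qed simp
  have sub: "almost_periodic_points T \<subseteq> Nl"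
  proof
    fix x assume x: "x \<in> almost_periodic_points T"
    have "\<not> (\<forall>m. \<forall>c\<in>C m. \<forall>N. \<exists>n\<ge>N. (T^^n) x \<in> ball c (1 / real (Suc m)))"
      using ap_minimal[OF cont x good] nm by blast
    then show "x \<in> Nl" using Nl(1) sp by auto
  qed
  have "almost_periodic_points T \<in> sets \<mu>" using ap_borel[OF cont] sets by simp
  moreover have "Nl \<in> null_sets \<mu>" using Nl by auto
  ultimately show ?thesis using null_sets_subset sub by blast
qed

end
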